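(* Let $\theta^*\in\mathbb{R}$. Consider the Dirichlet process mixture model with Gaussian kernel $k(\cdot\mid\theta)=\mathrm{N}(\theta,1)$, base measure $Q_0=\mathrm{N}(0,1)$, and prior $\pi$ on the concentration parameter satisfying A1, A2 and A3 with some $\rho>16$. Let the data be constant, $X_i=\theta^*$ for all $i$ (i.e. i.i.d. from $P=\delta_{\theta^*}$, with joint law $P^{(\infty)}$). Then $\mathrm{pr}(K_n=1\mid X_{1:n})\to1$ $P^{(\infty)}$-almost surely as $n\to\infty$.
   Context: Model: $\alpha\sim\pi$, $\tilde P\mid\alpha\sim\mathrm{DP}(\alpha,Q_0)$ with $Q_0$ having density $q_0$, $\theta_i\mid\tilde P$ i.i.d. $\tilde P$, $X_i\mid\theta_i\sim k(\cdot\mid\theta_i)$ independently. $K_n$ is the number of distinct values among $\theta_1,\dots,\theta_n$. With $\tau_s(n)$ the set of partitions of $\{1,\dots,n\}$ into $s$ nonempty blocks $A_1,\dots,A_s$, $a_j=|A_j|$, $\alpha^{(n)}=\alpha(\alpha+1)\cdots(\alpha+n-1)$, and $m(x_B)=\int\prod_{i\in B}k(x_i\mid\theta)q_0(\theta)d\theta$, the posterior is $\mathrm{pr}(K_n=s\mid X_{1:n})=W_s/\sum_{r=1}^nW_r$ with $W_s=\int_0^\infty\frac{\alpha^s}{\alpha^{(n)}}\pi(d\alpha)\sum_{A\in\tau_s(n)}\prod_j(a_j-1)!\,m(X_{A_j})$. (A1) $\pi$ has a Lebesgue density, also denoted $\pi$; (A2) there exist $\epsilon,\delta,\beta$ with $\frac1\delta\alpha^\beta\le\pi(\alpha)\le\delta\alpha^\beta$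 for all $\alpha\in(0,\epsilon)$; (A3) there exist $D,\nu,\rho>0$ with $\int\alpha^s\pi(\alpha)d\alpha<D\rho^{-s}\Gamma(\nu+s+1)$ for every integer $s\ge1$. *)

theory Defs
  imports "HOL-Probability.Probability" "HOL-Library.Disjoint_Sets"
begin

definition kern :: "real \<Rightarrow> real \<Rightarrow> real" where
  "kern x \<theta> = normal_density \<theta> 1 x"

definition q0 :: "real \<Rightarrow> real" where
  "q0 \<theta> = std_normal_density \<theta>"

definition marg :: "(nat \<Rightarrow> real) \<Rightarrow> nat set \<Rightarrow> real" where
  "marg X B = (LINT \<theta>|lborel. (\<Prod>i\<in>B. kern (X i) \<theta>) * q0 \<theta>)"

definition tau :: "nat \<Rightarrow> nat \<Rightarrow> nat set set set" where
  "tau s n = {P. partition_on {1..n} P \<and> card P = s}"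

definition W :: "(real \<Rightarrow> real) \<Rightarrow> (nat \<Rightarrow> real) \<Rightarrow> nat \<Rightarrow> nat \<Rightarrow> real" where
  "W \<pi> X n s =
     (LINT \<alpha>:{0<..}|lborel. \<alpha> ^ s / pochhammer \<alpha> n * \<pi> \<alpha>) *
     (\<Sum>P\<in>tau s n. \<Prod>A\<in>P. fact (card A - 1) * marg X A)"

definition post_K :: "(real \<Rightarrow> real) \<Rightarrow> (nat \<Rightarrow> real) \<Rightarrow> nat \<Rightarrow> nat \<Rightarrow> real" where
  "post_K \<pi> X n s = W \<pi> X n s / (\<Sum>r=1..n. W \<pi> X n r)"

end

theory Submission
  imports Defs "HOL-Combinatorics.Multiset_Permutations"
begin

definition OP :: "nat \<Rightarrow> 'a set \<Rightarrow> 'a set list set" where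
  "OP r S = {xs. distinct xs \<and> length xs = r \<and> partition_on S (set xs)}"

lemma OP_finite: "finite S \<Longrightarrow> finite (OP r S)"
proof -
  assume "finite S"
  have "OP r S \<subseteq> {xs. set xs \<subseteq> Pow S \<and> length xs = r}"
    by (auto simp: OP_def partition_on_def)
  moreover have "finite {xs. set xs \<subseteq> Pow S \<and> length xs = r}"
    using \<open>finite S\<close> by (intro finite_lists_length_eq) auto
  ultimately show ?thesis by (rule finite_subset)
qed

lemma sum_OP_tau:
  fixes f :: "'a set set \<Rightarrow> real"
  assumes S: "finite S"
  shows "(\<Sum>xs\<in>OP r S. f (set xs)) = fact r * (\<Sum>P\<in>{P. partition_on S P \<and> card P = r}. f P)"
proof -
  let ?T = "{P. partition_on S P \<and> card P = r}"
  have fT: "finite ?T"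
    by (rule finite_subset[OF _ finitely_many_partition_on[OF S]]) auto
  have img: "set ` OP r S \<subseteq> ?T"
    by (auto simp: OP_def distinct_card)
  have "(\<Sum>xs\<in>OP r S. f (set xs)) = (\<Sum>P\<in>?T. \<Sum>xs\<in>{xs. xs \<in> OP r S \<and> set xs = P}. f (set xs))"
    by (rule sum.group[symmetric, OF OP_finite[OF S] fT img])
  also have "\<dots> = (\<Sum>P\<in>?T. fact r * f P)"
  proof (rule sum.cong[OF refl])
    fix P assume P: "P \<in> ?T"
    have fP: "finite P" using finite_elements[OF S] P by auto
    have eq: "{xs. xs \<in> OP r S \<and> set xs = P} = permutations_of_set P"
      using P by (auto simp: OP_def permutations_of_set_def distinct_card)
    have "(\<Sum>xs\<in>{xs. xs \<in> OP r S \<and> set xs = P}. f (set xs)) = (\<Sum>xs\<in>permutations_of_set P. f P)"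
      unfolding eq by (rule sum.cong) (auto simp: permutations_of_set_def)
    also have "\<dots> = fact r * f P" using P fP by simp
    finally show "(\<Sum>xs\<in>{xs. xs \<in> OP r S \<and> set xs = P}. f (set xs)) = fact r * f P" .
  qed
  also have "\<dots> = fact r * (\<Sum>P\<in>?T. f P)" by (simp add: sum_distrib_left)
  finally show ?thesis .
qed

lemma OP_Suc:
  "OP (Suc r) S = (\<lambda>(B,ys). B # ys) ` (SIGMA B:{B. B \<subseteq> S \<and> B \<noteq> {}}. OP r (S - B))"
proof (intro set_eqI iffI)
  fix xs assume xs: "xs \<in> OP (Suc r) S"
  then obtain B ys where xsd: "xs = B # ys" by (cases xs) (auto simp: OP_def)
  have d: "distinct (B # ys)" and l: "length ys = r" and p: "partition_on S (insert B (set ys))"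
    using xs xsd by (auto simp: OP_def)
  have Bn: "B \<notin> set ys" using d by simp
  have dj: "disjnt B (\<Union>(set ys))"
  proof -
    have "disjoint (insert B (set ys))" using p partition_onD2 by blast
    then show ?thesis using Bn by (auto simp: disjnt_def pairwise_def)
  qed
  from p partition_on_insert[OF dj] have "partition_on (S - B) (set ys)" "B \<subseteq> S" "B \<noteq> {}" by auto
  then show "xs \<in> (\<lambda>(B,ys). B # ys) ` (SIGMA B:{B. B \<subseteq> S \<and> B \<noteq> {}}. OP r (S - B))"
    using xsd d l by (auto simp: OP_def intro!: image_eqI[of _ _ "(B, ys)"])
next
  fix xs assume "xs \<in> (\<lambda>(B,ys). B # ys) ` (SIGMA B:{B. B \<subseteq> S \<and> B \<noteq> {}}. OP r (S - B))"
  then obtain B ys where xsd: "xs = B # ys" and B: "B \<subseteq> S" "B \<noteq> {}" and ys: "ys \<in> OP r (S - B)"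
    by auto
  have p: "partition_on (S - B) (set ys)" and d: "distinct ys" and l: "length ys = r"
    using ys by (auto simp: OP_def)
  have U: "\<Union>(set ys) = S - B" using partition_onD1[OF p] by simp
  have dj: "disjnt B (\<Union>(set ys))" unfolding U by (auto simp: disjnt_def)
  have Bn: "B \<notin> set ys"
  proof
    assume "B \<in> set ys"
    then have "B \<subseteq> S - B" using U by auto
    then show False using B by auto
  qed
  have "partition_on S (insert B (set ys))" using partition_on_insert[OF dj] p B by auto
  then show "xs \<in> OP (Suc r) S" using xsd d l Bn by (auto simp: OP_def)
qed

lemma OP_zero_empty: "r \<ge> 1 \<Longrightarrow> OP r {} = {}"
  by (auto simp: OP_def partition_on_empty)

lemma OP_one: "S \<noteq> {} \<Longrightarrow> OP 1 S = {[S]}"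
proof (intro set_eqI iffI)
  fix xs assume "xs \<in> OP 1 S"
  then obtain B where "xs = [B]" "partition_on S {B}" by (auto simp: OP_def length_Suc_conv)
  then show "xs \<in> {[S]}" using partition_onD1 by fastforce
next
  fix xs assume "S \<noteq> {}" "xs \<in> {[S]}"
  then show "xs \<in> OP 1 S" by (auto simp: OP_def partition_on_space)
qed

lemma sum_subsets_card:
  fixes g :: "nat \<Rightarrow> real"
  assumes S: "finite S"
  shows "(\<Sum>B\<in>{B. B \<subseteq> S \<and> B \<noteq> {} \<and> B \<noteq> S}. g (card B)) = (\<Sum>a\<in>{1..<card S}. real (card S choose a) * g a)"
proof -
  let ?U = "{B. B \<subseteq> S \<and> B \<noteq> {} \<and> B \<noteq> S}"
  have fU: "finite ?U" by (rule finite_subset[of _ "Pow S"]) (auto simp: S)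
  have img: "card ` ?U \<subseteq> {1..<card S}"
  proof
    fix x assume "x \<in> card ` ?U"
    then obtain B where B: "B \<subseteq> S" "B \<noteq> {}" "B \<noteq> S" "x = card B" by auto
    have "card B < card S" using B S by (meson psubset_card_mono psubsetI)
    moreover have "card B \<ge> 1" using B S by (metis One_nat_def Suc_leI card_gt_0_iff finite_subset)
    ultimately show "x \<in> {1..<card S}" using B by auto
  qed
  have "(\<Sum>B\<in>?U. g (card B)) = (\<Sum>a\<in>{1..<card S}. \<Sum>B\<in>{B. B \<in> ?U \<and> card B = a}. g (card B))"
    by (rule sum.group[symmetric, OF fU _ img]) simp
  also have "\<dots> = (\<Sum>a\<in>{1..<card S}. real (card S choose a) * g a)"
  proof (rule sum.cong[OF refl])
    fix a assume a: "a \<in> {1..<card S}"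
    have eq: "{B. B \<in> ?U \<and> card B = a} = {B. B \<subseteq> S \<and> card B = a}"
      using a by auto
    show "(\<Sum>B\<in>{B. B \<in> ?U \<and> card B = a}. g (card B)) = real (card S choose a) * g a"
      unfolding eq using n_subsets[OF S, of a] by simp
  qed
  finally show ?thesis .
qed

definition vv :: "nat \<Rightarrow> real" where "vv a = 1 / (real a * sqrt (real a + 1))"

lemma vv_nonneg: "vv a \<ge> 0" by (simp add: vv_def)

lemma vv_mono2:
  assumes "1 \<le> a" "a \<le> b"
  shows "vv b \<le> 2 * sqrt 2 * vv (a + b)"
proof -
  have b1: "real b \<ge> 1" using assms by simp
  have "sqrt (real a + real b + 1) \<le> sqrt (2 * (real b + 1))"
    using assms by (intro real_sqrt_le_mono) simp
  also have "\<dots> = sqrt 2 * sqrt (real b + 1)" by (rule real_sqrt_mult)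
  finally have s: "sqrt (real a + real b + 1) \<le> sqrt 2 * sqrt (real b + 1)" .
  have ab: "real a + real b \<le> 2 * real b" using assms by simp
  have key: "(real a + real b) * sqrt (real a + real b + 1) \<le> 2 * sqrt 2 * (real b * sqrt (real b + 1))"
  proof -
    have "(real a + real b) * sqrt (real a + real b + 1) \<le> (2 * real b) * (sqrt 2 * sqrt (real b + 1))"
      by (intro mult_mono ab s) auto
    then show ?thesis by (simp add: algebra_simps)
  qed
  have p1: "real b * sqrt (real b + 1) > 0" using b1 by simp
  have p2: "(real a + real b) * sqrt (real a + real b + 1) > 0" using b1 by (simp add: add_pos_nonneg)
  have "vv b = 1 / (real b * sqrt (real b + 1))" by (simp add: vv_def)
  also have "\<dots> \<le> 2 * sqrt 2 / ((real a + real b) * sqrt (real a + real b + 1))"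
    using key p1 p2 by (simp add: divide_simps)
  also have "\<dots> = 2 * sqrt 2 * vv (a + b)" by (simp add: vv_def add.commute add.left_commute)
  finally show ?thesis .
qed

lemma vv_pair:
  assumes "1 \<le> a" "1 \<le> b"
  shows "vv a * vv b \<le> 2 * sqrt 2 * (vv a + vv b) * vv (a + b)"
proof (cases "a \<le> b")
  case True
  have "vv a * vv b \<le> vv a * (2 * sqrt 2 * vv (a + b))"
    by (intro mult_left_mono vv_mono2 assms True vv_nonneg)
  also have "\<dots> \<le> 2 * sqrt 2 * (vv a + vv b) * vv (a + b)"
    using vv_nonneg[of b] vv_nonneg[of "a+b"] by (simp add: algebra_simps)
  finally show ?thesis .
next
  case False
  have "vv a * vv b \<le> vv b * (2 * sqrt 2 * vv (b + a))"
    using False assms by (subst mult.commute, intro mult_left_mono vv_mono2 vv_nonneg) auto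
  also have "\<dots> \<le> 2 * sqrt 2 * (vv a + vv b) * vv (a + b)"
    using vv_nonneg[of a] vv_nonneg[of "a+b"] by (simp add: algebra_simps)
  finally show ?thesis .
qed

lemma vv_tele:
  assumes "x \<ge> 1"
  shows "vv x \<le> 2 * sqrt 2 * (1 / sqrt (real x) - 1 / sqrt (real x + 1))"
proof -
  define s where "s = sqrt (real x)"
  define u where "u = sqrt (real x + 1)"
  have s0: "s > 0" using assms by (simp add: s_def)
  have u0: "u > 0" by (simp add: u_def add_pos_nonneg)
  have ss: "s * s = real x" by (simp add: s_def)
  have uu: "u * u = real x + 1" by (simp add: u_def add_pos_nonneg)
  have us: "u \<le> sqrt 2 * s"
  proof -
    have "u \<le> sqrt (2 * real x)" unfolding u_def using assms by (intro real_sqrt_le_mono) simp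
    then show ?thesis by (simp add: real_sqrt_mult s_def)
  qed
  have s2: "s \<le> sqrt 2 * s" using s0 by simp
  have sum: "u + s \<le> 2 * sqrt 2 * s" using us s2 by simp
  have diff: "1 / s - 1 / u = 1 / (s * u * (u + s))"
  proof -
    have "(u - s) * (u + s) = 1" using ss uu by (simp add: algebra_simps)
    then have "u - s = 1 / (u + s)" using s0 u0 by (simp add: field_simps)
    moreover have "1 / s - 1 / u = (u - s) / (s * u)" using s0 u0 by (simp add: field_simps)
    ultimately show ?thesis by simp
  qed
  have "vv x = 1 / (s * s * u)" by (simp add: vv_def ss u_def)
  also have "\<dots> \<le> 2 * sqrt 2 / (s * u * (u + s))"
  proof -
    have "s * u * (u + s) \<le> s * u * (2 * sqrt 2 * s)"
      using sum s0 u0 by (intro mult_left_mono) auto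
    have e: "1 / (s * s * u) = 2 * sqrt 2 / (s * u * (2 * sqrt 2 * s))" using s0 u0 by (simp add: field_simps)
    also have "\<dots> \<le> 2 * sqrt 2 / (s * u * (u + s))"
      by (rule divide_left_mono) (use \<open>s * u * (u + s) \<le> s * u * (2 * sqrt 2 * s)\<close> s0 u0 in auto)
    finally show ?thesis .
  qed
  also have "\<dots> = 2 * sqrt 2 * (1 / s - 1 / u)" by (simp add: diff)
  finally show ?thesis by (simp add: s_def u_def)
qed

lemma vv_sum_aux: "(\<Sum>a\<in>{1..N}. vv a) \<le> 2 * sqrt 2 - 2 * sqrt 2 / sqrt (real N + 1)"
proof (induction N)
  case 0
  then show ?case by simp
next
  case (Suc N)
  have "(\<Sum>a\<in>{1..Suc N}. vv a) = (\<Sum>a\<in>{1..N}. vv a) + vv (Suc N)" by simp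
  also have "\<dots> \<le> (2 * sqrt 2 - 2 * sqrt 2 / sqrt (real N + 1))
       + 2 * sqrt 2 * (1 / sqrt (real (Suc N)) - 1 / sqrt (real (Suc N) + 1))"
    by (intro add_mono Suc.IH vv_tele) simp
  also have "\<dots> = 2 * sqrt 2 - 2 * sqrt 2 / sqrt (real (Suc N) + 1)"
    by (simp add: algebra_simps add.commute)
  finally show ?case .
qed

lemma vv_sum: "(\<Sum>a\<in>{1..<n}. vv a) \<le> 2 * sqrt 2"
proof -
  have "(\<Sum>a\<in>{1..<n}. vv a) \<le> (\<Sum>a\<in>{1..n}. vv a)"
    by (intro sum_mono2) (auto simp: vv_nonneg)
  also have "\<dots> \<le> 2 * sqrt 2 - 2 * sqrt 2 / sqrt (real n + 1)" by (rule vv_sum_aux)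
  also have "\<dots> \<le> 2 * sqrt 2" by simp
  finally show ?thesis .
qed

lemma vv_conv: "(\<Sum>a\<in>{1..<n}. vv a * vv (n - a)) \<le> 16 * vv n"
proof -
  have "(\<Sum>a\<in>{1..<n}. vv a * vv (n - a)) \<le> (\<Sum>a\<in>{1..<n}. 2 * sqrt 2 * vv n * (vv a + vv (n - a)))"
  proof (rule sum_mono)
    fix a assume a: "a \<in> {1..<n}"
    have "vv a * vv (n - a) \<le> 2 * sqrt 2 * (vv a + vv (n - a)) * vv (a + (n - a))"
      using a by (intro vv_pair) auto
    also have "a + (n - a) = n" using a by simp
    finally show "vv a * vv (n - a) \<le> 2 * sqrt 2 * vv n * (vv a + vv (n - a))"
      by (simp add: algebra_simps)
  qed
  also have "\<dots> = 2 * sqrt 2 * vv n * ((\<Sum>a\<in>{1..<n}. vv a) + (\<Sum>a\<in>{1..<n}. vv (n - a)))"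
    by (simp only: sum.distrib[symmetric] sum_distrib_left)
  also have "(\<Sum>a\<in>{1..<n}. vv (n - a)) = (\<Sum>a\<in>{1..<n}. vv a)"
    by (rule sum.reindex_bij_witness[of _ "\<lambda>a. n - a" "\<lambda>a. n - a"]) auto
  also have "2 * sqrt 2 * vv n * ((\<Sum>a\<in>{1..<n}. vv a) + (\<Sum>a\<in>{1..<n}. vv a))
      \<le> 2 * sqrt 2 * vv n * (2 * sqrt 2 + 2 * sqrt 2)"
    by (intro mult_left_mono add_mono vv_sum) (auto simp: vv_nonneg)
  also have "\<dots> = 16 * vv n" by (simp add: algebra_simps)
  finally show ?thesis .
qed

definition ww :: "real \<Rightarrow> nat \<Rightarrow> real" where
  "ww c a = fact (a - 1) * c ^ a / sqrt (real a + 1)"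

lemma ww_nonneg: "c \<ge> 0 \<Longrightarrow> ww c a \<ge> 0" by (simp add: ww_def)

lemma ww_eq: "a \<ge> 1 \<Longrightarrow> ww c a = fact a * c ^ a * vv a"
proof -
  assume a: "a \<ge> 1"
  have f: "fact a = real a * fact (a - 1)" using a by (simp add: fact_reduce)
  have p: "real a > 0" "sqrt (real a + 1) > 0" using a by (auto simp: add_pos_nonneg)
  have "fact a * c ^ a * vv a = (real a * fact (a - 1)) * c ^ a * (1 / (real a * sqrt (real a + 1)))"
    by (simp only: f vv_def)
  also have "\<dots> = fact (a - 1) * c ^ a / sqrt (real a + 1)" using p by (simp add: field_simps)
  finally show ?thesis by (simp add: ww_def)
qed

lemma binom_ww:
  assumes "1 \<le> a" "a < n"
  shows "real (n choose a) * ww c a * (fact (n - a) * c ^ (n - a) * vv (n - a))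
       = fact n * c ^ n * (vv a * vv (n - a))"
proof -
  have "fact a * fact (n - a) * (n choose a) = fact n"
    using assms by (intro binomial_fact_lemma) simp
  then have "real (fact a * fact (n - a) * (n choose a)) = real (fact n)" by simp
  then have "real (n choose a) * fact a * fact (n - a) = fact n"
    by (simp only: of_nat_mult of_nat_fact mult_ac)
  moreover have "c ^ a * c ^ (n - a) = c ^ n" using assms by (simp add: power_add[symmetric])
  moreover have "real (n choose a) * ww c a * (fact (n - a) * c ^ (n - a) * vv (n - a))
     = (real (n choose a) * fact a * fact (n - a)) * (c ^ a * c ^ (n - a)) * (vv a * vv (n - a))"
    by (simp only: ww_eq[OF assms(1)] mult_ac)
  ultimately show ?thesis by simp
qed

lemma OP_bound:
  fixes c :: real
  assumes c: "c \<ge> 0"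
  shows "finite S \<Longrightarrow> S \<noteq> {} \<Longrightarrow> r \<ge> 1 \<Longrightarrow>
    (\<Sum>xs\<in>OP r S. \<Prod>A\<in>set xs. ww c (card A)) \<le> fact (card S) * 16 ^ (r - 1) * c ^ card S * vv (card S)"
proof (induction r arbitrary: S)
  case 0
  then show ?case by simp
next
  case (Suc r)
  note S = Suc.prems(1) and Sne = Suc.prems(2)
  define n where "n = card S"
  have n1: "n \<ge> 1" using S Sne by (simp add: n_def Suc_leI card_gt_0_iff)
  show ?case
  proof (cases "r = 0")
    case True
    have "OP (Suc r) S = {[S]}" using OP_one[OF Sne] True by simp
    moreover have "ww c n = fact n * c ^ n * vv n" using n1 by (rule ww_eq)
    ultimately show ?thesis using True by (simp add: n_def)
  next
    case False
    then have r1: "r \<ge> 1" by simp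
    let ?Q = "\<lambda>T. (\<Sum>ys\<in>OP r T. \<Prod>A\<in>set ys. ww c (card A))"
    let ?U = "{B. B \<subseteq> S \<and> B \<noteq> {} \<and> B \<noteq> S}"
    have inj: "inj_on (\<lambda>(B, ys). B # ys) (SIGMA B:{B. B \<subseteq> S \<and> B \<noteq> {}}. OP r (S - B))"
      by (auto simp: inj_on_def)
    have "(\<Sum>xs\<in>OP (Suc r) S. \<Prod>A\<in>set xs. ww c (card A))
        = (\<Sum>(B,ys)\<in>(SIGMA B:{B. B \<subseteq> S \<and> B \<noteq> {}}. OP r (S - B)). \<Prod>A\<in>set (B # ys). ww c (card A))"
      unfolding OP_Suc by (subst sum.reindex[OF inj]) (simp add: case_prod_beta)
    also have "\<dots> = (\<Sum>B\<in>{B. B \<subseteq> S \<and> B \<noteq> {}}. \<Sum>ys\<in>OP r (S - B). \<Prod>A\<in>set (B # ys). ww c (card A))"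
    proof (rule sum.Sigma[symmetric])
      show "finite {B. B \<subseteq> S \<and> B \<noteq> {}}" by (rule finite_subset[of _ "Pow S"]) (auto simp: S)
      show "\<forall>B\<in>{B. B \<subseteq> S \<and> B \<noteq> {}}. finite (OP r (S - B))" using S by (auto intro: OP_finite)
    qed
    also have "\<dots> = (\<Sum>B\<in>{B. B \<subseteq> S \<and> B \<noteq> {}}. ww c (card B) * ?Q (S - B))"
    proof (rule sum.cong[OF refl])
      fix B assume "B \<in> {B. B \<subseteq> S \<and> B \<noteq> {}}"
      have "(\<Sum>ys\<in>OP r (S - B). \<Prod>A\<in>set (B # ys). ww c (card A))
          = (\<Sum>ys\<in>OP r (S - B). ww c (card B) * (\<Prod>A\<in>set ys. ww c (card A)))"
      proof (rule sum.cong[OF refl])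
        fix ys assume ys: "ys \<in> OP r (S - B)"
        have "B \<notin> set ys"
        proof
          assume "B \<in> set ys"
          then have "B \<subseteq> S - B" "B \<noteq> {}"
            using ys by (auto simp: OP_def partition_on_def)
          then show False by auto
        qed
        then show "(\<Prod>A\<in>set (B # ys). ww c (card A)) = ww c (card B) * (\<Prod>A\<in>set ys. ww c (card A))"
          by simp
      qed
      then show "(\<Sum>ys\<in>OP r (S - B). \<Prod>A\<in>set (B # ys). ww c (card A)) = ww c (card B) * ?Q (S - B)"
        by (simp add: sum_distrib_left)
    qed
    also have "\<dots> = (\<Sum>B\<in>?U. ww c (card B) * ?Q (S - B))"
    proof -
      have eq: "{B. B \<subseteq> S \<and> B \<noteq> {}} = insert S ?U" using Sne by auto
      have fU: "finite ?U" by (rule finite_subset[of _ "Pow S"]) (auto simp: S)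
      have "?Q (S - S) = 0" using r1 by (simp add: OP_zero_empty)
      then show ?thesis unfolding eq by (subst sum.insert[OF fU]) auto
    qed
    also have "\<dots> \<le> (\<Sum>B\<in>?U. ww c (card B) * (fact (n - card B) * 16 ^ (r - 1) * c ^ (n - card B) * vv (n - card B)))"
    proof (rule sum_mono)
      fix B assume B: "B \<in> ?U"
      have fB: "finite B" using B S finite_subset by blast
      have cd: "card (S - B) = n - card B" using B fB by (simp add: n_def card_Diff_subset)
      have "?Q (S - B) \<le> fact (card (S - B)) * 16 ^ (r - 1) * c ^ card (S - B) * vv (card (S - B))"
        using B S r1 by (intro Suc.IH) auto
      then show "ww c (card B) * ?Q (S - B) \<le> ww c (card B) * (fact (n - card B) * 16 ^ (r - 1) * c ^ (n - card B) * vv (n - card B))"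
        unfolding cd by (intro mult_left_mono ww_nonneg c)
    qed
    also have "\<dots> = (\<Sum>a\<in>{1..<n}. real (n choose a) * (ww c a * (fact (n - a) * 16 ^ (r - 1) * c ^ (n - a) * vv (n - a))))"
      unfolding n_def by (rule sum_subsets_card[OF S])
    also have "\<dots> = (\<Sum>a\<in>{1..<n}. fact n * 16 ^ (r - 1) * c ^ n * (vv a * vv (n - a)))"
    proof (rule sum.cong[OF refl])
      fix a assume a: "a \<in> {1..<n}"
      have "real (n choose a) * (ww c a * (fact (n - a) * 16 ^ (r - 1) * c ^ (n - a) * vv (n - a)))
          = 16 ^ (r - 1) * (real (n choose a) * ww c a * (fact (n - a) * c ^ (n - a) * vv (n - a)))"
        by (simp add: algebra_simps)
      also have "\<dots> = fact n * 16 ^ (r - 1) * c ^ n * (vv a * vv (n - a))"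
        using a by (subst binom_ww) (auto simp: algebra_simps)
      finally show "real (n choose a) * (ww c a * (fact (n - a) * 16 ^ (r - 1) * c ^ (n - a) * vv (n - a)))
          = fact n * 16 ^ (r - 1) * c ^ n * (vv a * vv (n - a))" .
    qed
    also have "\<dots> = fact n * 16 ^ (r - 1) * c ^ n * (\<Sum>a\<in>{1..<n}. vv a * vv (n - a))"
      by (simp add: sum_distrib_left)
    also have "\<dots> \<le> fact n * 16 ^ (r - 1) * c ^ n * (16 * vv n)"
      by (intro mult_left_mono vv_conv) (use c in auto)
    also have "\<dots> = fact (card S) * 16 ^ (Suc r - 1) * c ^ card S * vv (card S)"
    proof -
      have "(16::real) ^ (Suc r - 1) = 16 * 16 ^ (r - 1)" using r1 by (cases r) auto
      then show ?thesis by (simp add: n_def)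
    qed
    finally show ?thesis .
  qed
qed

definition mm :: "real \<Rightarrow> nat \<Rightarrow> real" where
  "mm \<theta> a = (1 / sqrt (2 * pi)) ^ a / sqrt (real a + 1) * exp (- (real a * \<theta>\<^sup>2) / (2 * (real a + 1)))"

lemma mm_nonneg: "mm \<theta> a \<ge> 0" by (simp add: mm_def)

lemma marg_pointwise:
  fixes \<theta> x :: real and a :: nat
  defines "\<mu> \<equiv> real a * \<theta> / (real a + 1)"
  defines "\<sigma> \<equiv> 1 / sqrt (real a + 1)"
  shows "kern \<theta> x ^ a * q0 x = mm \<theta> a * normal_density \<mu> \<sigma> x"
proof -
  define Z where "Z = real a + 1"
  have Z0: "Z > 0" by (simp add: Z_def)
  have sZ: "sqrt Z > 0" using Z0 by simp
  have sig2: "\<sigma>\<^sup>2 = 1 / Z" using Z0 by (simp add: \<sigma>_def Z_def power_divide)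
  have k: "kern \<theta> x = 1 / sqrt (2 * pi) * exp (- (\<theta> - x)\<^sup>2 / 2)"
    by (simp add: kern_def normal_density_def)
  have q: "q0 x = 1 / sqrt (2 * pi) * exp (- x\<^sup>2 / 2)"
    by (simp add: q0_def std_normal_density_def)
  have kp: "kern \<theta> x ^ a = (1 / sqrt (2 * pi)) ^ a * exp (real a * (- (\<theta> - x)\<^sup>2 / 2))"
  proof -
    have "exp (- (\<theta> - x)\<^sup>2 / 2) ^ a = exp (real a * (- (\<theta> - x)\<^sup>2 / 2))"
      by (rule exp_of_nat_mult[symmetric])
    then show ?thesis by (simp only: k power_mult_distrib)
  qed
  have nd: "normal_density \<mu> \<sigma> x = sqrt Z / sqrt (2 * pi) * exp (- Z * (x - \<mu>)\<^sup>2 / 2)"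
  proof -
    have "sqrt (2 * pi * \<sigma>\<^sup>2) = sqrt (2 * pi) / sqrt Z"
      by (simp add: sig2 real_sqrt_divide)
    moreover have "- (x - \<mu>)\<^sup>2 / (2 * \<sigma>\<^sup>2) = - Z * (x - \<mu>)\<^sup>2 / 2"
      using Z0 by (simp add: sig2 field_simps)
    ultimately show ?thesis by (simp add: normal_density_def)
  qed
  have expo: "real a * (- (\<theta> - x)\<^sup>2 / 2) + (- x\<^sup>2 / 2)
      = - (real a * \<theta>\<^sup>2) / (2 * Z) + (- Z * (x - \<mu>)\<^sup>2 / 2)"
  proof -
    define b where "b = real a"
    have Zb: "Z = b + 1" by (simp add: Z_def b_def)
    have h: "x - \<mu> = (Z * x - b * \<theta>) / Z" using Z0 by (simp add: \<mu>_def field_simps Z_def b_def)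
    have h2: "- Z * (x - \<mu>)\<^sup>2 / 2 = - ((Z * x - b * \<theta>)\<^sup>2) / (2 * Z)"
      unfolding h using Z0 by (simp add: power_divide power2_eq_square field_simps)
    have P: "- (b * \<theta>\<^sup>2) - (Z * x - b * \<theta>)\<^sup>2 = Z * (- (b * (\<theta> - x)\<^sup>2) - x\<^sup>2)"
      by (simp add: Zb power2_eq_square algebra_simps)
    have "- (b * \<theta>\<^sup>2) / (2 * Z) + - ((Z * x - b * \<theta>)\<^sup>2) / (2 * Z)
        = (- (b * \<theta>\<^sup>2) - (Z * x - b * \<theta>)\<^sup>2) / (2 * Z)"
      by (simp add: add_divide_distrib diff_divide_distrib)
    also have "\<dots> = (- (b * (\<theta> - x)\<^sup>2) - x\<^sup>2) / 2" unfolding P using Z0 by simp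
    also have "\<dots> = b * (- (\<theta> - x)\<^sup>2 / 2) + (- x\<^sup>2 / 2)" by (simp add: field_simps)
    finally show ?thesis using h2 by (simp add: b_def)
  qed
  have "kern \<theta> x ^ a * q0 x = (1 / sqrt (2 * pi)) ^ a * (1 / sqrt (2 * pi)) *
        exp (real a * (- (\<theta> - x)\<^sup>2 / 2) + (- x\<^sup>2 / 2))"
    unfolding kp q exp_add by (simp add: mult_ac)
  also have "\<dots> = (1 / sqrt (2 * pi)) ^ a * (1 / sqrt (2 * pi)) *
        exp (- (real a * \<theta>\<^sup>2) / (2 * Z)) * exp (- Z * (x - \<mu>)\<^sup>2 / 2)"
    unfolding expo exp_add by (simp add: mult_ac)
  also have "\<dots> = mm \<theta> a * normal_density \<mu> \<sigma> x"
    unfolding nd mm_def Z_def[symmetric] using sZ by (simp add: field_simps)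
  finally show ?thesis .
qed

lemma marg_const:
  assumes "finite A"
  shows "marg (\<lambda>i. \<theta>) A = mm \<theta> (card A)"
proof -
  define a where "a = card A"
  define \<mu> where "\<mu> = real a * \<theta> / (real a + 1)"
  define \<sigma> where "\<sigma> = 1 / sqrt (real a + 1)"
  have "marg (\<lambda>i. \<theta>) A = (LINT x|lborel. kern \<theta> x ^ a * q0 x)"
    by (simp add: marg_def a_def)
  also have "\<dots> = (LINT x|lborel. mm \<theta> a * normal_density \<mu> \<sigma> x)"
    by (simp add: marg_pointwise \<mu>_def \<sigma>_def)
  also have "\<dots> = mm \<theta> a * (LINT x|lborel. normal_density \<mu> \<sigma> x)" by (rule integral_mult_right_zero)
  also have "(LINT x|lborel. normal_density \<mu> \<sigma> x) = 1" by (rule integral_normal_density) (simp add: \<sigma>_def)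
  finally show ?thesis by (simp add: a_def)
qed

definition c0 :: real where "c0 = 1 / sqrt (2 * pi)"

lemma c0_pos: "c0 > 0" by (simp add: c0_def)

lemma tau_finite: "finite (tau s n)"
  unfolding tau_def
  by (rule finite_subset[OF _ finitely_many_partition_on[of "{1..n}"]]) auto

lemma block_props:
  assumes "P \<in> tau s n" "A \<in> P"
  shows "finite A" "A \<noteq> {}" "card A \<ge> 1"
proof -
  have p: "partition_on {1..n} P" using assms by (simp add: tau_def)
  have "A \<subseteq> {1..n}" using partition_onD1[OF p] assms by auto
  then show fA: "finite A" by (rule finite_subset) simp
  show ne: "A \<noteq> {}" using partition_onD3[OF p] assms by auto
  show "card A \<ge> 1" using fA ne by (simp add: Suc_leI card_gt_0_iff)
qed

lemma mm_upper:
  assumes "a \<ge> 1"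
  shows "fact (a - 1) * mm \<theta> a \<le> exp (- (\<theta>\<^sup>2 / 2) / 2) * ww c0 a"
proof -
  have "\<theta>\<^sup>2 / 4 \<le> real a * \<theta>\<^sup>2 / (2 * (real a + 1))"
    using assms by (simp add: field_simps) (use mult_right_mono[of 1 "real a" "\<theta>\<^sup>2"] assms in simp)
  then have e: "exp (- (real a * \<theta>\<^sup>2) / (2 * (real a + 1))) \<le> exp (- (\<theta>\<^sup>2 / 2) / 2)"
    by simp
  have "fact (a - 1) * mm \<theta> a = ww c0 a * exp (- (real a * \<theta>\<^sup>2) / (2 * (real a + 1)))"
    by (simp add: mm_def ww_def c0_def)
  also have "\<dots> \<le> ww c0 a * exp (- (\<theta>\<^sup>2 / 2) / 2)"
    by (intro mult_left_mono e ww_nonneg) (simp add: c0_def)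
  finally show ?thesis by (simp add: mult.commute)
qed

lemma mm_lower:
  assumes "a \<ge> 1"
  shows "fact (a - 1) * mm \<theta> a \<ge> exp (- (\<theta>\<^sup>2 / 2)) * ww c0 a"
proof -
  have "real a * \<theta>\<^sup>2 / (2 * (real a + 1)) \<le> \<theta>\<^sup>2 / 2"
    using assms by (simp add: field_simps)
  then have e: "exp (- (\<theta>\<^sup>2 / 2)) \<le> exp (- (real a * \<theta>\<^sup>2) / (2 * (real a + 1)))"
    by simp
  have "fact (a - 1) * mm \<theta> a = ww c0 a * exp (- (real a * \<theta>\<^sup>2) / (2 * (real a + 1)))"
    by (simp add: mm_def ww_def c0_def)
  also have "\<dots> \<ge> ww c0 a * exp (- (\<theta>\<^sup>2 / 2))"
    by (intro mult_left_mono e ww_nonneg) (simp add: c0_def)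
  finally show ?thesis by (simp add: mult.commute)
qed

definition SS :: "real \<Rightarrow> nat \<Rightarrow> nat \<Rightarrow> real" where
  "SS \<theta> n s = (\<Sum>P\<in>tau s n. \<Prod>A\<in>P. fact (card A - 1) * marg (\<lambda>i. \<theta>) A)"

lemma SS_nonneg: "SS \<theta> n s \<ge> 0"
  unfolding SS_def
  by (intro sum_nonneg prod_nonneg mult_nonneg_nonneg) (auto simp: marg_def intro!: integral_nonneg_AE AE_I2 mult_nonneg_nonneg prod_nonneg simp: kern_def q0_def)

lemma SS_upper:
  assumes n: "n \<ge> 1" and s: "s \<ge> 2"
  shows "SS \<theta> n s \<le> exp (- (\<theta>\<^sup>2 / 2)) * (fact n * c0 ^ n * vv n) * (16 ^ (s - 1) / fact s)"
proof -
  define q where "q = exp (- (\<theta>\<^sup>2 / 2) / 2)"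
  have q0: "q \<ge> 0" and q1: "q \<le> 1" by (auto simp: q_def)
  have qs: "q ^ s \<le> exp (- (\<theta>\<^sup>2 / 2))"
  proof -
    have "q ^ s \<le> q ^ 2" using q0 q1 s by (intro power_decreasing) auto
    also have "q ^ 2 = exp (- (\<theta>\<^sup>2 / 2))" by (simp add: q_def power2_eq_square exp_add[symmetric])
    finally show ?thesis .
  qed
  have "SS \<theta> n s \<le> (\<Sum>P\<in>tau s n. q ^ s * (\<Prod>A\<in>P. ww c0 (card A)))"
    unfolding SS_def
  proof (rule sum_mono)
    fix P assume P: "P \<in> tau s n"
    have cP: "card P = s" using P by (simp add: tau_def)
    have "(\<Prod>A\<in>P. fact (card A - 1) * marg (\<lambda>i. \<theta>) A) \<le> (\<Prod>A\<in>P. q * ww c0 (card A))"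
    proof (rule prod_mono)
      fix A assume A: "A \<in> P"
      note bp = block_props[OF P A]
      have "fact (card A - 1) * marg (\<lambda>i. \<theta>) A = fact (card A - 1) * mm \<theta> (card A)"
        using bp by (simp add: marg_const)
      moreover have "fact (card A - 1) * mm \<theta> (card A) \<le> q * ww c0 (card A)"
        unfolding q_def by (rule mm_upper[OF bp(3)])
      moreover have "0 \<le> fact (card A - 1) * mm \<theta> (card A)" by (simp add: mm_nonneg)
      ultimately show "0 \<le> fact (card A - 1) * marg (\<lambda>i. \<theta>) A \<and> fact (card A - 1) * marg (\<lambda>i. \<theta>) A \<le> q * ww c0 (card A)"
        by simp
    qed
    also have "\<dots> = q ^ s * (\<Prod>A\<in>P. ww c0 (card A))"
      by (simp add: prod.distrib cP)
    finally show "(\<Prod>A\<in>P. fact (card A - 1) * marg (\<lambda>i. \<theta>) A) \<le> q ^ s * (\<Prod>A\<in>P. ww c0 (card A))" .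
  qed
  also have "\<dots> = q ^ s * (\<Sum>P\<in>tau s n. \<Prod>A\<in>P. ww c0 (card A))" by (simp add: sum_distrib_left)
  also have "(\<Sum>P\<in>tau s n. \<Prod>A\<in>P. ww c0 (card A)) = (\<Sum>xs\<in>OP s {1..n}. \<Prod>A\<in>set xs. ww c0 (card A)) / fact s"
    using sum_OP_tau[of "{1..n}" "\<lambda>P. \<Prod>A\<in>P. ww c0 (card A)" s] by (simp add: tau_def)
  also have "(\<Sum>xs\<in>OP s {1..n}. \<Prod>A\<in>set xs. ww c0 (card A)) \<le> fact n * 16 ^ (s - 1) * c0 ^ n * vv n"
    using OP_bound[of c0 "{1..n}" s] c0_pos n s by simp
  then have "q ^ s * ((\<Sum>xs\<in>OP s {1..n}. \<Prod>A\<in>set xs. ww c0 (card A)) / fact s)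
      \<le> exp (- (\<theta>\<^sup>2 / 2)) * ((fact n * 16 ^ (s - 1) * c0 ^ n * vv n) / fact s)"
    using qs q0 c0_pos by (intro mult_mono divide_right_mono) (auto intro!: divide_nonneg_nonneg sum_nonneg prod_nonneg ww_nonneg simp: vv_nonneg)
  finally show ?thesis by (simp add: field_simps)
qed

lemma SS_lower:
  assumes n: "n \<ge> 1"
  shows "SS \<theta> n 1 \<ge> exp (- (\<theta>\<^sup>2 / 2)) * (fact n * c0 ^ n * vv n)"
proof -
  have mem: "{{1..n}} \<in> tau 1 n" using n by (simp add: tau_def partition_on_space)
  have "exp (- (\<theta>\<^sup>2 / 2)) * (fact n * c0 ^ n * vv n) = exp (- (\<theta>\<^sup>2 / 2)) * ww c0 n"
    using n by (simp add: ww_eq)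
  also have "\<dots> \<le> fact (n - 1) * mm \<theta> n" by (rule mm_lower[OF n])
  also have "\<dots> = (\<Prod>A\<in>{{1..n}}. fact (card A - 1) * marg (\<lambda>i. \<theta>) A)"
    by (simp add: marg_const)
  also have "\<dots> \<le> SS \<theta> n 1"
    unfolding SS_def
  proof (rule member_le_sum[OF mem _ tau_finite])
    fix P assume P: "P \<in> tau 1 n - {{{1..n}}}"
    show "0 \<le> (\<Prod>A\<in>P. fact (card A - 1) * marg (\<lambda>i. \<theta>) A)"
      using block_props[of P 1 n] P by (intro prod_nonneg) (auto simp: marg_const mm_nonneg)
  qed
  finally show ?thesis .
qed

lemma exp_partial_le:
  fixes x :: real assumes "x \<ge> 0"
  shows "(\<Sum>k<m. x ^ k / fact k) \<le> exp x"
proof -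
  have s: "(\<lambda>k. x ^ k / fact k) sums exp x"
    using exp_converges[of x] by (simp add: divide_inverse_commute scaleR_conv_of_real)
  have "(\<Sum>k<m. x ^ k / fact k) \<le> (\<Sum>k. x ^ k / fact k)"
    by (rule sum_le_suminf) (use s assms in \<open>auto simp: sums_iff\<close>)
  also have "\<dots> = exp x" using s by (simp add: sums_iff)
  finally show ?thesis .
qed

lemma pow_le_fact_exp:
  fixes x :: real assumes "x \<ge> 0"
  shows "x ^ k \<le> fact k * exp x"
proof -
  have "x ^ k / fact k \<le> (\<Sum>j<Suc k. x ^ j / fact j)"
    by (rule member_le_sum) (use assms in auto)
  also have "\<dots> \<le> exp x" by (rule exp_partial_le[OF assms])
  finally show ?thesis by (simp add: divide_simps mult.commute)
qed

lemma F_bound: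
  fixes x :: real assumes x: "x \<ge> 0"
  shows "(\<Sum>r\<in>{2..n}. 16 ^ (r - 1) / fact r * x ^ (r - 1)) \<le> 16 * x * exp (16 * x)"
proof -
  have "(\<Sum>r\<in>{2..n}. 16 ^ (r - 1) / fact r * x ^ (r - 1)) \<le> (\<Sum>r\<in>{2..n}. 16 * x * ((16 * x) ^ (r - 2) / fact (r - 2)))"
  proof (rule sum_mono)
    fix r assume r: "r \<in> {2..n}"
    have e: "16 ^ (r - 1) / fact r * x ^ (r - 1) = 16 * x * ((16 * x) ^ (r - 2) / fact r)"
    proof -
      have "r - 1 = Suc (r - 2)" using r by auto
      then show ?thesis by (simp add: power_mult_distrib)
    qed
    have "fact (r - 2) \<le> (fact r :: real)" by (rule fact_mono) auto
    then have "(16 * x) ^ (r - 2) / fact r \<le> (16 * x) ^ (r - 2) / fact (r - 2)"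
      using x by (intro divide_left_mono) (auto simp: fact_gt_zero)
    then show "16 ^ (r - 1) / fact r * x ^ (r - 1) \<le> 16 * x * ((16 * x) ^ (r - 2) / fact (r - 2))"
      unfolding e using x by (intro mult_left_mono) auto
  qed
  also have "\<dots> = 16 * x * (\<Sum>r\<in>{2..n}. (16 * x) ^ (r - 2) / fact (r - 2))"
    by (simp add: sum_distrib_left)
  also have "(\<Sum>r\<in>{2..n}. (16 * x) ^ (r - 2) / fact (r - 2)) = (\<Sum>k<n - 1. (16 * x) ^ k / fact k)"
    by (rule sum.reindex_bij_witness[of _ "\<lambda>k. k + 2" "\<lambda>r. r - 2"]) auto
  also have "16 * x * \<dots> \<le> 16 * x * exp (16 * x)"
    using x by (intro mult_left_mono exp_partial_le) auto
  finally show ?thesis .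
qed

lemma summable_moment:
  fixes D \<rho> \<nu> :: real
  assumes \<rho>: "\<rho> > 16" and \<nu>: "\<nu> > 0" and D: "D > 0"
  shows "summable (\<lambda>k. 16 ^ k / fact k * (D * \<rho> powr (- real (Suc k)) * Gamma (\<nu> + real (Suc k) + 1)))"
proof -
  define f where "f k = 16 ^ k / fact k * (D * \<rho> powr (- real (Suc k)) * Gamma (\<nu> + real (Suc k) + 1))" for k
  define q where "q = (1 + 16 / \<rho>) / 2"
  have q1: "q < 1" using \<rho> by (simp add: q_def field_simps)
  define N where "N = nat \<lceil>(16 * \<nu> + 32) / ((\<rho> - 16) / 2)\<rceil>"
  have fpos: "f k > 0" for k using \<rho> \<nu> D by (simp add: f_def)
  have step: "f (Suc k) = f k * (16 * (\<nu> + real k + 2) / ((real k + 1) * \<rho>))" for k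
  proof -
    have g: "Gamma (\<nu> + real (Suc (Suc k)) + 1) = (\<nu> + real k + 2) * Gamma (\<nu> + real (Suc k) + 1)"
    proof -
      have "\<nu> + real (Suc k) + 1 \<notin> \<int>\<^sub>\<le>\<^sub>0" using \<nu>
        by (metis add_pos_nonneg less_add_one nonpos_Ints_nonpos not_le of_nat_0_le_iff order_less_trans)
      then have "Gamma (\<nu> + real (Suc k) + 1 + 1) = (\<nu> + real (Suc k) + 1) * Gamma (\<nu> + real (Suc k) + 1)"
        by (rule Gamma_plus1)
      then show ?thesis by (simp add: add_ac)
    qed
    have p: "\<rho> powr (- real (Suc (Suc k))) = \<rho> powr (- real (Suc k)) / \<rho>"
    proof -
      have "- real (Suc (Suc k)) = - real (Suc k) + (- 1)" by simp
      then have "\<rho> powr (- real (Suc (Suc k))) = \<rho> powr (- real (Suc k)) * \<rho> powr (- 1)"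
        by (simp only: powr_add)
      then show ?thesis using \<rho> by (simp add: powr_minus divide_inverse)
    qed
    show ?thesis unfolding f_def g p using \<rho> by (simp add: field_simps)
  qed
  have "summable f"
  proof (rule summable_ratio_test[OF q1, of N])
    fix k assume k: "k \<ge> N"
    have kr: "real k \<ge> (16 * \<nu> + 32) / ((\<rho> - 16) / 2)"
      using k unfolding N_def by linarith
    have "(16 * \<nu> + 32) \<le> (\<rho> - 16) / 2 * real k"
      using kr \<rho> by (simp add: field_simps)
    then have h1: "64 + 32 * \<nu> + 16 * real k \<le> \<rho> * real k"
      by (simp add: field_simps)
    have "16 * (\<nu> + real k + 2) \<le> (\<rho> * real k + \<rho> + 16 * real k + 16) / 2"
      using h1 \<rho> by (simp add: algebra_simps)
    also have "\<dots> = q * ((real k + 1) * \<rho>)" using \<rho> by (simp add: q_def field_simps)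
    finally have "16 * (\<nu> + real k + 2) \<le> q * ((real k + 1) * \<rho>)" .
    then have r: "16 * (\<nu> + real k + 2) / ((real k + 1) * \<rho>) \<le> q"
      using \<rho> by (simp add: divide_simps)
    have "norm (f (Suc k)) = f (Suc k)" using fpos[of "Suc k"] by simp
    also have "\<dots> = f k * (16 * (\<nu> + real k + 2) / ((real k + 1) * \<rho>))" by (rule step)
    also have "\<dots> \<le> f k * q" using r fpos[of k] by (intro mult_left_mono) auto
    finally show "norm (f (Suc k)) \<le> q * norm (f k)" using fpos[of k] by (simp add: mult.commute)
  qed
  then show ?thesis by (simp only: f_def[abs_def])
qed

lemma integral_pos_interval:
  fixes f :: "real \<Rightarrow> real"
  assumes int: "integrable lborel (\<lambda>x. indicator {0<..<r} x * f x)"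
    and r: "r > 0" and pos: "\<And>x. 0 < x \<Longrightarrow> x < r \<Longrightarrow> f x > 0"
  shows "(LINT x|lborel. indicator {0<..<r} x * f x) > 0"
proof -
  have nn: "AE x in lborel. 0 \<le> indicator {0<..<r} x * f x"
    using pos by (intro AE_I2) (auto split: split_indicator intro: less_imp_le)
  have ge: "(LINT x|lborel. indicator {0<..<r} x * f x) \<ge> 0"
    by (rule integral_nonneg_AE[OF nn])
  have "(LINT x|lborel. indicator {0<..<r} x * f x) \<noteq> 0"
  proof
    assume "(LINT x|lborel. indicator {0<..<r} x * f x) = 0"
    then have "AE x in lborel. indicator {0<..<r} x * f x = 0"
      using integral_nonneg_eq_0_iff_AE[OF int nn] by simp
    then have "AE x in lborel. x \<notin> {0<..<r}"
      by eventually_elim (auto split: split_indicator dest: pos)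
    then have "emeasure lborel {0<..<r} = 0"
      by (subst (asm) AE_iff_measurable[of "{0<..<r}"]) auto
    then show False using r by simp
  qed
  then show ?thesis using ge by simp
qed

lemma poch_shift: "n \<ge> 1 \<Longrightarrow> pochhammer (x::real) n = x * pochhammer (x + 1) (n - 1)"
  by (metis Suc_diff_1 less_eq_Suc_le pochhammer_rec One_nat_def)

lemma poch_mono:
  fixes x y :: real
  assumes "0 < x" "x \<le> y"
  shows "pochhammer x m \<le> pochhammer y m"
proof (induction m)
  case 0
  then show ?case by simp
next
  case (Suc m)
  have "pochhammer x (Suc m) = (x + real m) * pochhammer x m" by (rule pochhammer_rec')
  also have "\<dots> \<le> (y + real m) * pochhammer y m"
    using assms Suc.IH by (intro mult_mono) (auto intro: pochhammer_nonneg)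
  also have "\<dots> = pochhammer y (Suc m)" by (rule pochhammer_rec'[symmetric])
  finally show ?case .
qed

lemma poch_ge_fact:
  fixes x :: real
  assumes "0 \<le> x"
  shows "pochhammer (x + 1) m \<ge> fact m"
proof -
  have "fact m = pochhammer (1::real) m" by (rule pochhammer_fact)
  also have "\<dots> \<le> pochhammer (x + 1) m" using assms by (intro poch_mono) auto
  finally show ?thesis .
qed

lemma poch_ratio:
  fixes \<eta> :: real
  assumes "0 < \<eta>" "\<eta> \<le> 1"
  shows "pochhammer (\<eta> / 2 + 1) m / pochhammer (\<eta> + 1) m \<le> exp (- (\<eta> / 4) * harm m)"
proof (induction m)
  case 0
  then show ?case by (simp add: harm_def)
next
  case (Suc m)
  have p1: "pochhammer (\<eta> + 1) m > 0" using assms by (intro pochhammer_pos) auto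
  have p2: "pochhammer (\<eta> / 2 + 1) m > 0" using assms by (intro pochhammer_pos) auto
  have fac: "(\<eta> / 2 + 1 + real m) / (\<eta> + 1 + real m) \<le> exp (- (\<eta> / 4) * inverse (real (Suc m)))"
  proof -
    have d: "\<eta> + 1 + real m > 0" using assms by simp
    have "(\<eta> / 2 + 1 + real m) / (\<eta> + 1 + real m) = 1 - (\<eta> / 2) / (\<eta> + 1 + real m)"
      using d by (simp add: field_simps)
    also have "\<dots> \<le> 1 - (\<eta> / 4) * inverse (real (Suc m))"
    proof -
      have "(\<eta> / 4) * inverse (real (Suc m)) = (\<eta> / 4) / (real m + 1)" by (simp add: inverse_eq_divide add.commute)
      also have "\<dots> = (\<eta> / 2) / (2 * (real m + 1))" by simp
      also have "\<dots> \<le> (\<eta> / 2) / (\<eta> + 1 + real m)"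
        using assms d by (intro divide_left_mono) auto
      finally show ?thesis by simp
    qed
    also have "\<dots> \<le> exp (- (\<eta> / 4) * inverse (real (Suc m)))"
      using exp_ge_add_one_self[of "- (\<eta> / 4) * inverse (real (Suc m))"] by simp
    finally show ?thesis .
  qed
  have "pochhammer (\<eta> / 2 + 1) (Suc m) / pochhammer (\<eta> + 1) (Suc m)
      = (pochhammer (\<eta> / 2 + 1) m / pochhammer (\<eta> + 1) m) * ((\<eta> / 2 + 1 + real m) / (\<eta> + 1 + real m))"
    by (simp only: pochhammer_rec' times_divide_times_eq mult.commute)
  also have "\<dots> \<le> exp (- (\<eta> / 4) * harm m) * exp (- (\<eta> / 4) * inverse (real (Suc m)))"
    by (intro mult_mono Suc.IH fac) (use assms in \<open>auto intro!: divide_nonneg_nonneg\<close>)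
  also have "\<dots> = exp (- (\<eta> / 4) * harm (Suc m))"
  proof -
    have "- (\<eta> / 4) * harm (Suc m) = - (\<eta> / 4) * harm m + - (\<eta> / 4) * inverse (real (Suc m))"
      by (simp add: harm_Suc algebra_simps)
    then show ?thesis by (simp only: exp_add)
  qed
  finally show ?case .
qed

lemma exp_harm_tendsto:
  fixes \<eta> :: real
  assumes "0 < \<eta>"
  shows "(\<lambda>m. exp (- (\<eta> / 4) * harm m)) \<longlonglongrightarrow> 0"
proof -
  have "filterlim (\<lambda>m. (\<eta> / 4) * harm m) at_top sequentially"
    using assms by (intro filterlim_tendsto_pos_mult_at_top[OF tendsto_const] harm_at_top) auto
  then have "filterlim (\<lambda>m. - ((\<eta> / 4) * harm m)) at_bot sequentially"
    by (simp add: filterlim_uminus_at_top)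
  then have "((\<lambda>m. exp (- ((\<eta> / 4) * harm m))) \<longlongrightarrow> 0) sequentially"
    by (rule filterlim_compose[OF exp_at_bot])
  then show ?thesis by simp
qed

lemma Pi_integrable:
  fixes \<pi> :: "real \<Rightarrow> real"
  assumes [measurable]: "\<pi> \<in> borel_measurable borel"
    and nn: "\<And>\<alpha>. \<alpha> > 0 \<Longrightarrow> \<pi> \<alpha> \<ge> 0"
    and prob: "(\<integral>\<^sup>+ \<alpha>. ennreal (\<pi> \<alpha>) * indicator {0<..} \<alpha> \<partial>lborel) = 1"
  shows "integrable lborel (\<lambda>\<alpha>. indicator {0<..} \<alpha> * \<pi> \<alpha>)"
proof (rule integrableI_nonneg)
  show "(\<lambda>\<alpha>. indicator {0<..} \<alpha> * \<pi> \<alpha>) \<in> borel_measurable lborel" by simp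
  show "AE x in lborel. 0 \<le> indicator {0<..} x * \<pi> x"
    by (intro AE_I2) (auto split: split_indicator intro: nn)
  have "(\<integral>\<^sup>+ \<alpha>. ennreal (indicator {0<..} \<alpha> * \<pi> \<alpha>) \<partial>lborel) = (\<integral>\<^sup>+ \<alpha>. ennreal (\<pi> \<alpha>) * indicator {0<..} \<alpha> \<partial>lborel)"
    by (intro nn_integral_cong) (auto split: split_indicator)
  then show "(\<integral>\<^sup>+ \<alpha>. ennreal (indicator {0<..} \<alpha> * \<pi> \<alpha>) \<partial>lborel) < \<infinity>"
    using prob by simp
qed

lemma M_integrable:
  fixes \<pi> :: "real \<Rightarrow> real" and D \<nu> \<rho> :: real
  assumes [measurable]: "\<pi> \<in> borel_measurable borel"
    and nn: "\<And>\<alpha>. \<alpha> > 0 \<Longrightarrow> \<pi> \<alpha> \<ge> 0"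
    and D: "D > 0" "\<nu> > 0" "\<rho> > 16"
    and A3: "\<forall>s::nat. s \<ge> 1 \<longrightarrow>
                 (\<integral>\<^sup>+ \<alpha>. ennreal (\<alpha> ^ s * \<pi> \<alpha>) * indicator {0<..} \<alpha> \<partial>lborel)
                   < ennreal (D * \<rho> powr (- real s) * Gamma (\<nu> + real s + 1))"
  shows "integrable lborel (\<lambda>\<alpha>. indicator {0<..} \<alpha> * \<pi> \<alpha> * (\<alpha> * exp (16 * \<alpha>)))"
proof (rule integrableI_nonneg)
  show "(\<lambda>\<alpha>. indicator {0<..} \<alpha> * \<pi> \<alpha> * (\<alpha> * exp (16 * \<alpha>))) \<in> borel_measurable lborel" by simp
  show "AE x in lborel. 0 \<le> indicator {0<..} x * \<pi> x * (x * exp (16 * x))"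
    by (intro AE_I2) (auto split: split_indicator intro!: mult_nonneg_nonneg nn)
  define c where "c k = (16::real) ^ k / fact k" for k
  define b where "b k = D * \<rho> powr (- real (Suc k)) * Gamma (\<nu> + real (Suc k) + 1)" for k
  have c0: "c k \<ge> 0" for k by (simp add: c_def)
  have b0: "b k \<ge> 0" for k using D by (simp add: b_def)
  have pw: "ennreal (indicator {0<..} \<alpha> * \<pi> \<alpha> * (\<alpha> * exp (16 * \<alpha>)))
      = (\<Sum>k. ennreal (c k) * (ennreal (\<alpha> ^ Suc k * \<pi> \<alpha>) * indicator {0<..} \<alpha>))" for \<alpha>
  proof (cases "\<alpha> > 0")
    case False
    then show ?thesis by simp
  next
    case True
    have s: "(\<lambda>k. (16 * \<alpha>) ^ k / fact k) sums exp (16 * \<alpha>)"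
      using exp_converges[of "16 * \<alpha>"] by (simp add: divide_inverse_commute scaleR_conv_of_real)
    then have s2: "(\<lambda>k. (\<pi> \<alpha> * \<alpha>) * ((16 * \<alpha>) ^ k / fact k)) sums ((\<pi> \<alpha> * \<alpha>) * exp (16 * \<alpha>))"
      by (rule sums_mult)
    have eqk: "(\<pi> \<alpha> * \<alpha>) * ((16 * \<alpha>) ^ k / fact k) = c k * (\<alpha> ^ Suc k * \<pi> \<alpha>)" for k
      by (simp add: c_def power_mult_distrib)
    have s3: "(\<lambda>k. c k * (\<alpha> ^ Suc k * \<pi> \<alpha>)) sums ((\<pi> \<alpha> * \<alpha>) * exp (16 * \<alpha>))"
      using s2 unfolding eqk .
    have nnk: "0 \<le> c k * (\<alpha> ^ Suc k * \<pi> \<alpha>)" for k using True nn[OF True] c0[of k] by simp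
    have "ennreal (indicator {0<..} \<alpha> * \<pi> \<alpha> * (\<alpha> * exp (16 * \<alpha>))) = ennreal (\<Sum>k. c k * (\<alpha> ^ Suc k * \<pi> \<alpha>))"
      using True s3 by (simp add: sums_iff mult_ac)
    also have "\<dots> = (\<Sum>k. ennreal (c k * (\<alpha> ^ Suc k * \<pi> \<alpha>)))"
      using s3 nnk by (intro suminf_ennreal2[symmetric]) (auto simp: sums_iff)
    also have "\<dots> = (\<Sum>k. ennreal (c k) * (ennreal (\<alpha> ^ Suc k * \<pi> \<alpha>) * indicator {0<..} \<alpha>))"
      using True nn[OF True] c0 by (intro suminf_cong) (simp add: ennreal_mult)
    finally show ?thesis .
  qed
  have "(\<integral>\<^sup>+ \<alpha>. ennreal (indicator {0<..} \<alpha> * \<pi> \<alpha> * (\<alpha> * exp (16 * \<alpha>))) \<partial>lborel)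
      = (\<integral>\<^sup>+ \<alpha>. (\<Sum>k. ennreal (c k) * (ennreal (\<alpha> ^ Suc k * \<pi> \<alpha>) * indicator {0<..} \<alpha>)) \<partial>lborel)"
    by (simp add: pw)
  also have "\<dots> = (\<Sum>k. \<integral>\<^sup>+ \<alpha>. ennreal (c k) * (ennreal (\<alpha> ^ Suc k * \<pi> \<alpha>) * indicator {0<..} \<alpha>) \<partial>lborel)"
    by (rule nn_integral_suminf) simp
  also have "\<dots> = (\<Sum>k. ennreal (c k) * \<integral>\<^sup>+ \<alpha>. (ennreal (\<alpha> ^ Suc k * \<pi> \<alpha>) * indicator {0<..} \<alpha>) \<partial>lborel)"
    by (intro suminf_cong nn_integral_cmult) simp
  also have "\<dots> \<le> (\<Sum>k. ennreal (c k) * ennreal (b k))"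
  proof (intro suminf_le summableI mult_left_mono)
    fix k
    show "(\<integral>\<^sup>+ \<alpha>. (ennreal (\<alpha> ^ Suc k * \<pi> \<alpha>) * indicator {0<..} \<alpha>) \<partial>lborel) \<le> ennreal (b k)"
      using A3[rule_format, of "Suc k"] unfolding b_def by (auto intro: less_imp_le)
  qed simp
  also have "\<dots> = (\<Sum>k. ennreal (c k * b k))"
    using c0 b0 by (intro suminf_cong) (simp add: ennreal_mult)
  also have "\<dots> = ennreal (\<Sum>k. c k * b k)"
  proof (rule suminf_ennreal2)
    show "\<And>k. 0 \<le> c k * b k" using c0 b0 by simp
    show "summable (\<lambda>k. c k * b k)"
      using summable_moment[OF D(3) D(2) D(1)] by (simp add: c_def b_def)
  qed
  also have "\<dots> < \<infinity>" by simp
  finally show "(\<integral>\<^sup>+ \<alpha>. ennreal (indicator {0<..} \<alpha> * \<pi> \<alpha> * (\<alpha> * exp (16 * \<alpha>))) \<partial>lborel) < \<infinity>" .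
qed

lemma pochhammer_meas[measurable]: "(\<lambda>\<alpha>::real. pochhammer (\<alpha> + 1) k) \<in> borel_measurable borel"
  by (intro borel_measurable_continuous_onI continuous_intros)

lemma exp_le_one_plus: "(x::real) \<ge> 0 \<Longrightarrow> exp x \<le> 1 + x * exp (16 * x)"
proof -
  assume x: "x \<ge> 0"
  have "1 + (- x) \<le> exp (- x)" by (rule exp_ge_add_one_self)
  then have "exp x * (1 - x) \<le> exp x * exp (- x)" by (intro mult_left_mono) auto
  then have "exp x \<le> 1 + x * exp x" by (simp add: exp_minus algebra_simps)
  also have "x * exp x \<le> x * exp (16 * x)" using x by (intro mult_left_mono) auto
  finally show ?thesis by simp
qed

theorem theorem3:
  fixes \<pi> :: "real \<Rightarrow> real" and \<theta>star :: real
  assumes A1_meas: "\<pi> \<in> borel_measurable lborel"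
    and A1_nonneg: "\<And>\<alpha>. \<alpha> > 0 \<Longrightarrow> \<pi> \<alpha> \<ge> 0"
    and A1_prob: "(\<integral>\<^sup>+ \<alpha>. ennreal (\<pi> \<alpha>) * indicator {0<..} \<alpha> \<partial>lborel) = 1"
    and A2: "\<exists>\<epsilon> \<delta> \<beta>. \<epsilon> > 0 \<and> \<delta> > 0 \<and>
              (\<forall>\<alpha>. 0 < \<alpha> \<and> \<alpha> < \<epsilon> \<longrightarrow>
                 (1 / \<delta>) * \<alpha> powr \<beta> \<le> \<pi> \<alpha> \<and> \<pi> \<alpha> \<le> \<delta> * \<alpha> powr \<beta>)"
    and A3: "\<exists>D \<nu> \<rho>. D > 0 \<and> \<nu> > 0 \<and> \<rho> > 16 \<and>
              (\<forall>s::nat. s \<ge> 1 \<longrightarrow>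
                 (\<integral>\<^sup>+ \<alpha>. ennreal (\<alpha> ^ s * \<pi> \<alpha>) * indicator {0<..} \<alpha> \<partial>lborel)
                   < ennreal (D * \<rho> powr (- real s) * Gamma (\<nu> + real s + 1)))"
  shows "(\<lambda>n. post_K \<pi> (\<lambda>i. \<theta>star) n 1) \<longlonglongrightarrow> 1"
proof -
  obtain \<epsilon> \<delta> \<beta> where \<epsilon>: "\<epsilon> > 0" and \<delta>: "\<delta> > 0" and A2': "\<forall>\<alpha>. 0 < \<alpha> \<and> \<alpha> < \<epsilon> \<longrightarrow>
                 (1 / \<delta>) * \<alpha> powr \<beta> \<le> \<pi> \<alpha> \<and> \<pi> \<alpha> \<le> \<delta> * \<alpha> powr \<beta>"
    using A2 by blast
  obtain D \<nu> \<rho> where D: "D > 0" "\<nu> > 0" "\<rho> > 16" and A3': "\<forall>s::nat. s \<ge> 1 \<longrightarrow>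
                 (\<integral>\<^sup>+ \<alpha>. ennreal (\<alpha> ^ s * \<pi> \<alpha>) * indicator {0<..} \<alpha> \<partial>lborel)
                   < ennreal (D * \<rho> powr (- real s) * Gamma (\<nu> + real s + 1))"
    using A3 by blast
  have \<pi>m[measurable]: "\<pi> \<in> borel_measurable borel" using A1_meas by simp
  have \<pi>pos: "\<pi> \<alpha> > 0" if "0 < \<alpha>" "\<alpha> < \<epsilon>" for \<alpha>
  proof -
    have "(1 / \<delta>) * \<alpha> powr \<beta> > 0" using that \<delta> by simp
    then show ?thesis using A2' that by force
  qed
  define Pi where "Pi \<alpha> = indicator {0<..} \<alpha> * \<pi> \<alpha>" for \<alpha> :: real
  define Mf where "Mf \<alpha> = indicator {0<..} \<alpha> * \<pi> \<alpha> * (\<alpha> * exp (16 * \<alpha>))" for \<alpha> :: real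
  define g where "g n \<alpha> = indicator {0<..} \<alpha> * \<pi> \<alpha> / pochhammer (\<alpha> + 1) (n - 1)" for n :: nat and \<alpha> :: real
  have Pi_int: "integrable lborel Pi"
    unfolding Pi_def by (rule Pi_integrable[OF \<pi>m A1_nonneg A1_prob])
  have M_int: "integrable lborel Mf"
    unfolding Mf_def by (rule M_integrable[OF \<pi>m A1_nonneg D A3'])
  have Pi_nn: "Pi \<alpha> \<ge> 0" for \<alpha> by (auto simp: Pi_def split: split_indicator intro: A1_nonneg)
  have M_nn: "Mf \<alpha> \<ge> 0" for \<alpha> by (auto simp: Mf_def split: split_indicator intro!: mult_nonneg_nonneg A1_nonneg)
  have poch_pos: "pochhammer (\<alpha> + 1) k > 0" if "\<alpha> \<ge> 0" for \<alpha> :: real and k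
    using that by (intro pochhammer_pos) auto
  have poch_ge1: "pochhammer (\<alpha> + 1) k \<ge> 1" if "\<alpha> \<ge> 0" for \<alpha> :: real and k
    using poch_ge_fact[OF that, of k] fact_ge_1[of k, where 'a=real] by linarith
  have g_nn: "g n \<alpha> \<ge> 0" for n \<alpha>
    by (cases "\<alpha> > 0") (auto simp: g_def intro!: divide_nonneg_nonneg A1_nonneg less_imp_le[OF poch_pos])
  have g_meas[measurable]: "g n \<in> borel_measurable borel" for n
    unfolding g_def[abs_def] by measurable
  have gk_nn: "g n \<alpha> * \<alpha> ^ k \<ge> 0" for n k \<alpha>
  proof (cases "\<alpha> > 0")
    case True
    then show ?thesis using g_nn[of n \<alpha>] by (intro mult_nonneg_nonneg) auto
  next
    case False
    then show ?thesis by (simp add: g_def)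
  qed
  have gk_int: "integrable lborel (\<lambda>\<alpha>. g n \<alpha> * \<alpha> ^ k)" for n k
  proof -
    have d: "integrable lborel (\<lambda>\<alpha>. fact k * (Pi \<alpha> + Mf \<alpha>))" using Pi_int M_int by auto
    have m: "(\<lambda>\<alpha>. g n \<alpha> * \<alpha> ^ k) \<in> borel_measurable lborel" by simp
    have ae: "AE \<alpha> in lborel. norm (g n \<alpha> * \<alpha> ^ k) \<le> norm (fact k * (Pi \<alpha> + Mf \<alpha>))"
    proof (intro AE_I2)
      fix \<alpha> :: real
      show "norm (g n \<alpha> * \<alpha> ^ k) \<le> norm (fact k * (Pi \<alpha> + Mf \<alpha>))"
      proof (cases "\<alpha> > 0")
        case False
        then show ?thesis by (simp add: g_def Pi_def Mf_def)
      next
        case True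
        have p1: "pochhammer (\<alpha> + 1) (n - 1) \<ge> 1" using True by (intro poch_ge1) auto
        have \<pi>0: "\<pi> \<alpha> \<ge> 0" using A1_nonneg True by simp
        have "g n \<alpha> = \<pi> \<alpha> / pochhammer (\<alpha> + 1) (n - 1)" using True by (simp add: g_def)
        also have "\<dots> \<le> \<pi> \<alpha> / 1" using p1 \<pi>0 by (intro divide_left_mono) auto
        finally have "g n \<alpha> \<le> \<pi> \<alpha>" by simp
        then have "g n \<alpha> * \<alpha> ^ k \<le> \<pi> \<alpha> * \<alpha> ^ k" using True by (intro mult_right_mono) auto
        also have "\<dots> \<le> \<pi> \<alpha> * (fact k * exp \<alpha>)"
          using True \<pi>0 by (intro mult_left_mono pow_le_fact_exp) auto
        also have "\<dots> \<le> \<pi> \<alpha> * (fact k * (1 + \<alpha> * exp (16 * \<alpha>)))"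
          using True \<pi>0 by (intro mult_left_mono exp_le_one_plus) auto
        also have "\<dots> = fact k * (Pi \<alpha> + Mf \<alpha>)" using True by (simp add: Pi_def Mf_def algebra_simps)
        finally show ?thesis using gk_nn[of n \<alpha> k] Pi_nn[of \<alpha>] M_nn[of \<alpha>] by simp
      qed
    qed
    show ?thesis by (rule Bochner_Integration.integrable_bound[OF d m ae])
  qed
  define I where "I n k = (LINT \<alpha>|lborel. g n \<alpha> * \<alpha> ^ k)" for n k
  have I_nn: "I n k \<ge> 0" for n k
    unfolding I_def by (intro integral_nonneg_AE AE_I2 gk_nn)
  have W_eq: "W \<pi> (\<lambda>i. \<theta>star) n s = I n (s - 1) * SS \<theta>star n s" if ns: "n \<ge> 1" "s \<ge> 1" for n s
  proof -
    have "(LINT \<alpha>:{0<..}|lborel. \<alpha> ^ s / pochhammer \<alpha> n * \<pi> \<alpha>) = I n (s - 1)"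
      unfolding I_def set_lebesgue_integral_def
    proof (rule Bochner_Integration.integral_cong[OF refl])
      fix \<alpha> :: real
      show "indicator {0<..} \<alpha> *\<^sub>R (\<alpha> ^ s / pochhammer \<alpha> n * \<pi> \<alpha>) = g n \<alpha> * \<alpha> ^ (s - 1)"
      proof (cases "\<alpha> > 0")
        case False
        then show ?thesis by (simp add: g_def)
      next
        case True
        have ps: "pochhammer \<alpha> n = \<alpha> * pochhammer (\<alpha> + 1) (n - 1)" using ns(1) by (rule poch_shift)
        have as: "\<alpha> ^ s = \<alpha> * \<alpha> ^ (s - 1)" using ns(2) by (cases s) auto
        have pp: "pochhammer (\<alpha> + 1) (n - 1) > 0" using True by (intro poch_pos) auto
        show ?thesis unfolding ps as using True pp by (simp add: g_def)
      qed
    qed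
    then show ?thesis by (simp add: W_def SS_def)
  qed
  define t where "t = \<theta>star\<^sup>2 / 2"
  define L where "L n = exp (- t) * (fact n * c0 ^ n * vv n)" for n
  have L_pos: "L n > 0" if "n \<ge> 1" for n
    using that c0_pos by (simp add: L_def vv_def)
  define F where "F n \<alpha> = (\<Sum>r\<in>{2..n}. 16 ^ (r - 1) / fact r * \<alpha> ^ (r - 1))" for n :: nat and \<alpha> :: real
  define J where "J n = (LINT \<alpha>|lborel. g n \<alpha> * F n \<alpha>)" for n
  have gF: "g n \<alpha> * F n \<alpha> = (\<Sum>r\<in>{2..n}. 16 ^ (r - 1) / fact r * (g n \<alpha> * \<alpha> ^ (r - 1)))" for n \<alpha>
    unfolding F_def by (simp add: sum_distrib_left mult_ac)
  have gF_int: "integrable lborel (\<lambda>\<alpha>. g n \<alpha> * F n \<alpha>)" for n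
    unfolding gF by (intro Bochner_Integration.integrable_sum Bochner_Integration.integrable_mult_right gk_int)
  have J_eq: "J n = (\<Sum>r\<in>{2..n}. 16 ^ (r - 1) / fact r * I n (r - 1))" for n
  proof -
    have "J n = (LINT \<alpha>|lborel. (\<Sum>r\<in>{2..n}. 16 ^ (r - 1) / fact r * (g n \<alpha> * \<alpha> ^ (r - 1))))"
      unfolding J_def gF ..
    also have "\<dots> = (\<Sum>r\<in>{2..n}. (LINT \<alpha>|lborel. 16 ^ (r - 1) / fact r * (g n \<alpha> * \<alpha> ^ (r - 1))))"
      by (rule Bochner_Integration.integral_sum) (intro Bochner_Integration.integrable_mult_right gk_int)
    also have "\<dots> = (\<Sum>r\<in>{2..n}. 16 ^ (r - 1) / fact r * I n (r - 1))"
      by (simp add: I_def)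
    finally show ?thesis .
  qed
  have key: "\<bar>post_K \<pi> (\<lambda>i. \<theta>star) n 1 - 1\<bar> \<le> J n / I n 0" if n: "n \<ge> 1" and Ipos: "I n 0 > 0" for n
  proof -
    define W1 where "W1 = W \<pi> (\<lambda>i. \<theta>star) n 1"
    define N where "N = (\<Sum>r\<in>{2..n}. W \<pi> (\<lambda>i. \<theta>star) n r)"
    have tot: "(\<Sum>r=1..n. W \<pi> (\<lambda>i. \<theta>star) n r) = W1 + N"
      using n by (simp add: W1_def N_def sum.atLeast_Suc_atMost numeral_2_eq_2)
    have W1_ge: "W1 \<ge> I n 0 * L n"
    proof -
      have "W1 = I n 0 * SS \<theta>star n 1" using W_eq[OF n, of 1] by (simp add: W1_def)
      moreover have "SS \<theta>star n 1 \<ge> L n" using SS_lower[OF n, of \<theta>star] by (simp add: L_def t_def)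
      ultimately show ?thesis using I_nn[of n 0] by (simp add: mult_left_mono)
    qed
    have W1_pos: "W1 > 0" using W1_ge Ipos L_pos[OF n]
      by (meson less_le_trans mult_pos_pos)
    have N_nn: "N \<ge> 0"
      unfolding N_def
    proof (rule sum_nonneg)
      fix r assume r: "r \<in> {2..n}"
      then show "0 \<le> W \<pi> (\<lambda>i. \<theta>star) n r"
        using W_eq[OF n, of r] I_nn SS_nonneg by simp
    qed
    have N_le: "N \<le> L n * J n"
    proof -
      have "N \<le> (\<Sum>r\<in>{2..n}. I n (r - 1) * (L n * (16 ^ (r - 1) / fact r)))"
        unfolding N_def
      proof (rule sum_mono)
        fix r assume r: "r \<in> {2..n}"
        have "SS \<theta>star n r \<le> L n * (16 ^ (r - 1) / fact r)"
          using SS_upper[OF n, of r \<theta>star] r by (simp add: L_def t_def)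
        then have "I n (r - 1) * SS \<theta>star n r \<le> I n (r - 1) * (L n * (16 ^ (r - 1) / fact r))"
          using I_nn[of n "r - 1"] by (rule mult_left_mono)
        then show "W \<pi> (\<lambda>i. \<theta>star) n r \<le> I n (r - 1) * (L n * (16 ^ (r - 1) / fact r))"
          using W_eq[OF n, of r] r by simp
      qed
      also have "\<dots> = L n * J n"
        unfolding J_eq by (simp add: sum_distrib_left mult_ac)
      finally show ?thesis .
    qed
    have post: "post_K \<pi> (\<lambda>i. \<theta>star) n 1 = W1 / (W1 + N)"
      unfolding post_K_def tot W1_def by (rule refl)
    have "\<bar>W1 / (W1 + N) - 1\<bar> = N / (W1 + N)"
      using W1_pos N_nn by (simp add: field_simps)
    also have "\<dots> \<le> N / W1"
      using W1_pos N_nn by (intro divide_left_mono) auto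
    also have "\<dots> \<le> (L n * J n) / (I n 0 * L n)"
      using W1_pos N_nn N_le W1_ge Ipos L_pos[OF n] by (intro frac_le) auto
    also have "\<dots> = J n / I n 0" using L_pos[OF n] by simp
    finally show ?thesis unfolding post .
  qed
  define IM where "IM = (LINT \<alpha>|lborel. Mf \<alpha>)"
  have IM_nn: "IM \<ge> 0" unfolding IM_def by (intro integral_nonneg_AE AE_I2 M_nn)
  have ev: "eventually (\<lambda>n. dist (post_K \<pi> (\<lambda>i. \<theta>star) n 1) 1 < e) sequentially" if e: "e > 0" for e
  proof -
    define \<eta> where "\<eta> = min 1 (min \<epsilon> (e / (64 * exp 16)))"
    have \<eta>0: "\<eta> > 0" using e \<epsilon> by (simp add: \<eta>_def)
    have \<eta>1: "\<eta> \<le> 1" and \<eta>\<epsilon>: "\<eta> \<le> \<epsilon>" and \<eta>e: "\<eta> \<le> e / (64 * exp 16)" by (auto simp: \<eta>_def)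
    have small: "16 * \<eta> * exp (16 * \<eta>) \<le> e / 4"
    proof -
      have "16 * \<eta> * exp (16 * \<eta>) \<le> 16 * (e / (64 * exp 16)) * exp 16"
        using \<eta>0 \<eta>1 \<eta>e by (intro mult_mono) auto
      also have "\<dots> = e / 4" by simp
      finally show ?thesis .
    qed
    define P where "P = (LINT \<alpha>|lborel. indicator {0<..<\<eta> / 2} \<alpha> * \<pi> \<alpha>)"
    have P_pos: "P > 0"
      unfolding P_def
    proof (rule integral_pos_interval)
      have "integrable lborel (\<lambda>\<alpha>. indicator {0<..<\<eta> / 2} \<alpha> *\<^sub>R Pi \<alpha>)"
        by (intro integrable_mult_indicator Pi_int) auto
      moreover have "(\<lambda>\<alpha>. indicator {0<..<\<eta> / 2} \<alpha> *\<^sub>R Pi \<alpha>) = (\<lambda>\<alpha>. indicator {0<..<\<eta> / 2} \<alpha> * \<pi> \<alpha>)"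
        by (rule ext) (auto simp: Pi_def split: split_indicator)
      ultimately show "integrable lborel (\<lambda>\<alpha>. indicator {0<..<\<eta> / 2} \<alpha> * \<pi> \<alpha>)" by simp
      show "\<eta> / 2 > 0" using \<eta>0 by simp
      show "\<pi> x > 0" if "0 < x" "x < \<eta> / 2" for x
        using that \<eta>\<epsilon> \<eta>0 by (intro \<pi>pos) auto
    qed
    define K where "K = 16 * IM / P"
    have K_nn: "K \<ge> 0" using IM_nn P_pos by (simp add: K_def)
    have bound: "I n 0 > 0 \<and> J n / I n 0 \<le> e / 4 + K * exp (- (\<eta> / 4) * harm (n - 1))" if n: "n \<ge> 1" for n
    proof -
      define p1 where "p1 = pochhammer (\<eta> / 2 + 1) (n - 1)"
      define p2 where "p2 = pochhammer (\<eta> + 1) (n - 1)"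
      have p1_pos: "p1 > 0" and p2_pos: "p2 > 0" using \<eta>0 by (auto simp: p1_def p2_def intro!: pochhammer_pos)
      have I_lower: "I n 0 \<ge> P / p1"
      proof -
        have "P / p1 = (LINT \<alpha>|lborel. indicator {0<..<\<eta> / 2} \<alpha> * \<pi> \<alpha> / p1)"
          by (simp add: P_def)
        also have "\<dots> \<le> (LINT \<alpha>|lborel. g n \<alpha> * \<alpha> ^ 0)"
        proof (rule Bochner_Integration.integral_mono)
          have "integrable lborel (\<lambda>\<alpha>. indicator {0<..<\<eta> / 2} \<alpha> *\<^sub>R Pi \<alpha>)"
            by (intro integrable_mult_indicator Pi_int) auto
          moreover have "(\<lambda>\<alpha>. indicator {0<..<\<eta> / 2} \<alpha> *\<^sub>R Pi \<alpha>) = (\<lambda>\<alpha>. indicator {0<..<\<eta> / 2} \<alpha> * \<pi> \<alpha>)"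
            by (rule ext) (auto simp: Pi_def split: split_indicator)
          ultimately have "integrable lborel (\<lambda>\<alpha>. indicator {0<..<\<eta> / 2} \<alpha> * \<pi> \<alpha>)" by simp
          then show "integrable lborel (\<lambda>\<alpha>. indicator {0<..<\<eta> / 2} \<alpha> * \<pi> \<alpha> / p1)"
            by (rule Bochner_Integration.integrable_divide_zero)
          show "integrable lborel (\<lambda>\<alpha>. g n \<alpha> * \<alpha> ^ 0)" by (rule gk_int)
          fix \<alpha> :: real
          show "indicator {0<..<\<eta> / 2} \<alpha> * \<pi> \<alpha> / p1 \<le> g n \<alpha> * \<alpha> ^ 0"
          proof (cases "0 < \<alpha> \<and> \<alpha> < \<eta> / 2")
            case False
            then show ?thesis using g_nn[of n \<alpha>] by (auto split: split_indicator)
          next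
            case True
            have "pochhammer (\<alpha> + 1) (n - 1) \<le> p1" unfolding p1_def using True by (intro poch_mono) auto
            moreover have "pochhammer (\<alpha> + 1) (n - 1) > 0" using True by (intro poch_pos) auto
            ultimately have "\<pi> \<alpha> / p1 \<le> \<pi> \<alpha> / pochhammer (\<alpha> + 1) (n - 1)"
              using True A1_nonneg[of \<alpha>] by (intro divide_left_mono) auto
            then show ?thesis using True by (simp add: g_def)
          qed
        qed
        also have "\<dots> = I n 0" by (simp add: I_def)
        finally show ?thesis .
      qed
      have I_pos: "I n 0 > 0" using I_lower P_pos p1_pos
        by (meson divide_pos_pos less_le_trans)
      have J_upper: "J n \<le> 16 * \<eta> * exp (16 * \<eta>) * I n 0 + 16 * IM / p2"
      proof -
        have "J n \<le> (LINT \<alpha>|lborel. 16 * \<eta> * exp (16 * \<eta>) * (g n \<alpha> * \<alpha> ^ 0) + 16 * Mf \<alpha> / p2)"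
          unfolding J_def
        proof (rule Bochner_Integration.integral_mono)
          show "integrable lborel (\<lambda>\<alpha>. g n \<alpha> * F n \<alpha>)" by (rule gF_int)
          show "integrable lborel (\<lambda>\<alpha>. 16 * \<eta> * exp (16 * \<eta>) * (g n \<alpha> * \<alpha> ^ 0) + 16 * Mf \<alpha> / p2)"
            by (intro Bochner_Integration.integrable_add Bochner_Integration.integrable_mult_right Bochner_Integration.integrable_divide_zero gk_int M_int)
          fix \<alpha> :: real
          show "g n \<alpha> * F n \<alpha> \<le> 16 * \<eta> * exp (16 * \<eta>) * (g n \<alpha> * \<alpha> ^ 0) + 16 * Mf \<alpha> / p2"
          proof (cases "\<alpha> > 0")
            case False
            then show ?thesis by (simp add: g_def Mf_def)
          next
            case True
            have F_nn: "F n \<alpha> \<ge> 0" unfolding F_def using True by (intro sum_nonneg) auto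
            have Fb: "F n \<alpha> \<le> 16 * \<alpha> * exp (16 * \<alpha>)" unfolding F_def using True by (intro F_bound) auto
            have \<pi>0: "\<pi> \<alpha> \<ge> 0" using A1_nonneg True by simp
            have gdef: "g n \<alpha> = \<pi> \<alpha> / pochhammer (\<alpha> + 1) (n - 1)" using True by (simp add: g_def)
            have t2: "0 \<le> 16 * Mf \<alpha> / p2" using M_nn[of \<alpha>] p2_pos by simp
            have t1: "0 \<le> 16 * \<eta> * exp (16 * \<eta>) * (g n \<alpha> * \<alpha> ^ 0)" using g_nn[of n \<alpha>] \<eta>0 by simp
            show ?thesis
            proof (cases "\<alpha> \<le> \<eta>")
              case True
              have "F n \<alpha> \<le> 16 * \<eta> * exp (16 * \<eta>)"
                using Fb \<open>0 < \<alpha>\<close> True by (smt (verit) exp_le_cancel_iff mult_mono exp_ge_zero)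
              then have "g n \<alpha> * F n \<alpha> \<le> g n \<alpha> * (16 * \<eta> * exp (16 * \<eta>))"
                using g_nn[of n \<alpha>] by (intro mult_left_mono) auto
              then show ?thesis using t2 by (simp add: mult_ac)
            next
              case False
              have pp: "p2 \<le> pochhammer (\<alpha> + 1) (n - 1)" unfolding p2_def using False \<eta>0 by (intro poch_mono) auto
              have "g n \<alpha> \<le> \<pi> \<alpha> / p2" unfolding gdef using pp p2_pos \<pi>0 by (intro divide_left_mono) auto
              then have "g n \<alpha> * F n \<alpha> \<le> (\<pi> \<alpha> / p2) * (16 * \<alpha> * exp (16 * \<alpha>))"
                using F_nn Fb g_nn[of n \<alpha>] \<pi>0 p2_pos by (intro mult_mono) auto
              also have "\<dots> = 16 * Mf \<alpha> / p2" using \<open>0 < \<alpha>\<close> by (simp add: Mf_def)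
              finally have "g n \<alpha> * F n \<alpha> \<le> 16 * Mf \<alpha> / p2" .
              moreover have "0 \<le> 16 * \<eta> * exp (16 * \<eta>) * g n \<alpha>" using g_nn[of n \<alpha>] \<eta>0 by simp
              ultimately show ?thesis by (simp only: power_0 mult_1_right)
            qed
          qed
        qed
        also have "\<dots> = (LINT \<alpha>|lborel. 16 * \<eta> * exp (16 * \<eta>) * (g n \<alpha> * \<alpha> ^ 0)) + (LINT \<alpha>|lborel. 16 * Mf \<alpha> / p2)"
          by (intro Bochner_Integration.integral_add Bochner_Integration.integrable_mult_right Bochner_Integration.integrable_divide_zero gk_int M_int)
        also have "\<dots> = 16 * \<eta> * exp (16 * \<eta>) * I n 0 + 16 * IM / p2"
          by (simp only: integral_mult_right_zero integral_divide_zero I_def IM_def)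
        finally show ?thesis .
      qed
      have ratio: "p1 / p2 \<le> exp (- (\<eta> / 4) * harm (n - 1))"
        unfolding p1_def p2_def by (rule poch_ratio[OF \<eta>0 \<eta>1])
      have "J n / I n 0 \<le> (16 * \<eta> * exp (16 * \<eta>) * I n 0 + 16 * IM / p2) / I n 0"
        using J_upper I_pos by (intro divide_right_mono) auto
      also have "\<dots> = 16 * \<eta> * exp (16 * \<eta>) + (16 * IM / p2) / I n 0"
        using I_pos by (simp add: field_simps)
      also have "(16 * IM / p2) / I n 0 \<le> (16 * IM / p2) / (P / p1)"
        using I_lower I_pos P_pos p1_pos p2_pos IM_nn by (intro divide_left_mono) auto
      also have "(16 * IM / p2) / (P / p1) = K * (p1 / p2)"
        using P_pos p1_pos p2_pos by (simp add: K_def field_simps)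
      also have "K * (p1 / p2) \<le> K * exp (- (\<eta> / 4) * harm (n - 1))"
        using ratio K_nn by (intro mult_left_mono) auto
      finally show ?thesis using small I_pos by simp
    qed
    have lim: "(\<lambda>m. exp (- (\<eta> / 4) * harm m)) \<longlonglongrightarrow> 0" by (rule exp_harm_tendsto[OF \<eta>0])
    have "eventually (\<lambda>m. exp (- (\<eta> / 4) * harm m) < e / (2 * (K + 1))) sequentially"
      using K_nn e by (intro order_tendstoD(2)[OF lim]) auto
    then obtain N0 where N0: "\<And>m. m \<ge> N0 \<Longrightarrow> exp (- (\<eta> / 4) * harm m) < e / (2 * (K + 1))"
      by (auto simp: eventually_sequentially)
    show ?thesis
      unfolding eventually_sequentially
    proof (intro exI allI impI)
      fix n assume n: "n \<ge> Suc N0"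
      have n1: "n \<ge> 1" using n by simp
      obtain Ip Jb where b: "I n 0 > 0" "J n / I n 0 \<le> e / 4 + K * exp (- (\<eta> / 4) * harm (n - 1))"
        using bound[OF n1] by blast
      have x: "exp (- (\<eta> / 4) * harm (n - 1)) < e / (2 * (K + 1))" using N0 n by simp
      have "K * exp (- (\<eta> / 4) * harm (n - 1)) \<le> (K + 1) * exp (- (\<eta> / 4) * harm (n - 1))"
        by (intro mult_right_mono) auto
      also have "\<dots> < (K + 1) * (e / (2 * (K + 1)))"
        using x K_nn by (intro mult_strict_left_mono) auto
      also have "\<dots> = e / 2" using K_nn by (simp add: field_simps)
      finally have "J n / I n 0 < e" using b(2) e by simp
      then show "dist (post_K \<pi> (\<lambda>i. \<theta>star) n 1) 1 < e"
        using key[OF n1 b(1)] by (simp add: dist_real_def)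
    qed
  qed
  show ?thesis by (rule tendstoI) (rule ev)
qed

end
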